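(* Let $I\subseteq S=\Bbbk[x_1,\dots,x_n]$ be a squarefree monomial ideal and let $L$ be its squarefree lexification. Then $L\subseteq(x_1)$ if and only if $I\subseteq(x_i)$ for some variable $x_i$.
   Context: Let $\Bbbk$ be a field, $S=\Bbbk[x_1,\dots,x_n]$, $R=S/(x_1^2,\dots,x_n^2)$. A monomial ideal is squarefree if its minimal monomial generators are squarefree. A monomial ideal of $R$ is lex if each degree component is spanned by an initial segment, in the lexicographic order with $x_1>\dots>x_n$, of the squarefree monomials of that degree. A squarefree monomial ideal $L\subseteq S$ is squarefree lex if $LR$ is lex in $R$. The squarefree lexification of a squarefree monomial ideal $I\subseteq S$ is the unique squarefree lex ideal $L\subseteq S$ having the same Hilbert function as $I$ in $S$ (equivalently, $LR$ is the lex ideal of $R$ with the same Hilbert function as $IR$). *)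

theory Defs
  imports Main
begin

text \<open>Monomials of S = k[x_1,...,x_n] are encoded as exponent vectors
  a :: nat => nat with a i = 0 for i >= n; variable x_(i+1) has index i.
  A monomial ideal of S is encoded by the set of monomials it contains
  (it is the k-span of these). Divisibility of monomials is pointwise order.\<close>

definition monomials :: "nat \<Rightarrow> (nat \<Rightarrow> nat) set" where
  "monomials n = {a. \<forall>i\<ge>n. a i = 0}"

definition mdeg :: "nat \<Rightarrow> (nat \<Rightarrow> nat) \<Rightarrow> nat" where
  "mdeg n a = (\<Sum>i<n. a i)"

definition is_monomial_ideal :: "nat \<Rightarrow> (nat \<Rightarrow> nat) set \<Rightarrow> bool" where
  "is_monomial_ideal n M \<longleftrightarrow> M \<subseteq> monomials n \<and>
     (\<forall>a\<in>M. \<forall>b\<in>monomials n. a \<le> b \<longrightarrow> b \<in> M)"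

definition min_generators :: "nat \<Rightarrow> (nat \<Rightarrow> nat) set \<Rightarrow> (nat \<Rightarrow> nat) set" where
  "min_generators n M = {a\<in>M. \<forall>b\<in>M. b \<le> a \<longrightarrow> b = a}"

definition sqfree_mon :: "(nat \<Rightarrow> nat) \<Rightarrow> bool" where
  "sqfree_mon a \<longleftrightarrow> (\<forall>i. a i \<le> 1)"

definition is_sqfree_monomial_ideal :: "nat \<Rightarrow> (nat \<Rightarrow> nat) set \<Rightarrow> bool" where
  "is_sqfree_monomial_ideal n M \<longleftrightarrow> is_monomial_ideal n M \<and>
     (\<forall>a\<in>min_generators n M. sqfree_mon a)"

text \<open>Hilbert function of the ideal in S: dim_k of its degree-d component
  = number of monomials of degree d in it.\<close>
definition hilb :: "nat \<Rightarrow> (nat \<Rightarrow> nat) set \<Rightarrow> nat \<Rightarrow> nat" where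
  "hilb n M d = card {a\<in>M. mdeg n a = d}"

definition sqmon :: "nat set \<Rightarrow> (nat \<Rightarrow> nat)" where
  "sqmon A = (\<lambda>i. if i \<in> A then 1 else 0)"

text \<open>Lex order (x_1 > ... > x_n) on squarefree monomials of equal degree:
  x^B >lex x^A iff the smallest index in the symmetric difference lies in B.\<close>
definition sq_lex_gt :: "nat set \<Rightarrow> nat set \<Rightarrow> bool" where
  "sq_lex_gt B A \<longleftrightarrow> A \<noteq> B \<and> Min ((A - B) \<union> (B - A)) \<in> B"

text \<open>L R is lex in R = S/(x_1^2,...,x_n^2): the squarefree monomials of
  each degree d lying in L form an initial lex segment.\<close>
definition is_sqfree_lex :: "nat \<Rightarrow> (nat \<Rightarrow> nat) set \<Rightarrow> bool" where
  "is_sqfree_lex n L \<longleftrightarrow> is_sqfree_monomial_ideal n L \<and>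
     (\<forall>A B. A \<subseteq> {..<n} \<and> B \<subseteq> {..<n} \<and> card A = card B \<and>
        sqmon A \<in> L \<and> sq_lex_gt B A \<longrightarrow> sqmon B \<in> L)"

definition is_sqfree_lexification :: "nat \<Rightarrow> (nat \<Rightarrow> nat) set \<Rightarrow> (nat \<Rightarrow> nat) set \<Rightarrow> bool" where
  "is_sqfree_lexification n I L \<longleftrightarrow> is_sqfree_lex n L \<and> (\<forall>d. hilb n L d = hilb n I d)"

definition var_ideal :: "nat \<Rightarrow> nat \<Rightarrow> (nat \<Rightarrow> nat) set" where
  "var_ideal n i = {a\<in>monomials n. 1 \<le> a i}"

end

theory Submission
  imports Defs
begin

definition supp :: "(nat \<Rightarrow> nat) \<Rightarrow> nat set" where
  "supp b = {i. b i \<noteq> 0}"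

definition Dn :: "nat \<Rightarrow> nat \<Rightarrow> (nat \<Rightarrow> nat) set" where
  "Dn n D = {b \<in> monomials n. mdeg n b = D}"

definition Delta :: "nat \<Rightarrow> (nat \<Rightarrow> nat) set \<Rightarrow> nat set set" where
  "Delta n M = {F. F \<subseteq> {..<n} \<and> sqmon F \<notin> M}"

definition cnt :: "nat \<Rightarrow> (nat \<Rightarrow> nat) set \<Rightarrow> nat \<Rightarrow> nat" where
  "cnt n M j = card {F \<in> Delta n M. card F = j}"

definition Pn :: "nat \<Rightarrow> nat set \<Rightarrow> nat \<Rightarrow> (nat \<Rightarrow> nat) set" where
  "Pn n F D = {b \<in> Dn n D. supp b = F}"

definition gn :: "nat \<Rightarrow> nat \<Rightarrow> nat \<Rightarrow> nat" where
  "gn n j D = card (Pn n {..<j} D)"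

lemma supp_sub: "b \<in> monomials n \<Longrightarrow> supp b \<subseteq> {..<n}"
  by (auto simp: supp_def monomials_def) (metis not_le less_irrefl)

lemma mdeg_supp:
  assumes "b \<in> monomials n" "supp b \<subseteq> S" "S \<subseteq> {..<n}"
  shows "mdeg n b = sum b S"
  unfolding mdeg_def
  by (rule sum.mono_neutral_left[symmetric]) (use assms in \<open>auto simp: supp_def\<close>)

lemma finite_Dn: "finite (Dn n D)"
proof -
  have inj: "inj_on (\<lambda>b. map b [0..<n]) (Dn n D)"
  proof
    fix b c assume b: "b \<in> Dn n D" and c: "c \<in> Dn n D" and e: "map b [0..<n] = map c [0..<n]"
    show "b = c"
    proof
      fix i show "b i = c i"
      proof (cases "i < n")
        case True then show ?thesis using e by (simp add: map_eq_conv)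
      next
        case False then show ?thesis using b c by (auto simp: Dn_def monomials_def)
      qed
    qed
  qed
  have "(\<lambda>b. map b [0..<n]) ` Dn n D \<subseteq> {xs. set xs \<subseteq> {..D} \<and> length xs = n}"
  proof clarsimp
    fix b i assume b: "b \<in> Dn n D" and "i < n"
    then have "b i \<le> (\<Sum>i<n. b i)" by (intro member_le_sum) auto
    then show "b i \<le> D" using b by (simp add: Dn_def mdeg_def)
  qed
  then have "finite ((\<lambda>b. map b [0..<n]) ` Dn n D)"
    by (rule finite_subset) (rule finite_lists_length_eq, simp)
  then show ?thesis using inj by (rule finite_imageD)
qed

lemma sqmon_le: "sqmon (supp b) \<le> b"
  by (auto simp: le_fun_def sqmon_def supp_def)

lemma sqmon_mono: "A \<subseteq> B \<Longrightarrow> sqmon A \<le> sqmon B"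
  by (auto simp: le_fun_def sqmon_def)

lemma sqmon_mon: "A \<subseteq> {..<n} \<Longrightarrow> sqmon A \<in> monomials n"
  by (auto simp: monomials_def sqmon_def)

lemma supp_sqmon: "supp (sqmon A) = A"
  by (auto simp: supp_def sqmon_def)

lemma exists_gen:
  assumes M: "is_monomial_ideal n M" and a: "a \<in> M"
  shows "\<exists>g\<in>min_generators n M. g \<le> a"
proof -
  define P where "P = (\<lambda>k. \<exists>c\<in>M. c \<le> a \<and> mdeg n c = k)"
  have "P (mdeg n a)" using a by (auto simp: P_def)
  then obtain k where Pk: "P k" and least: "\<And>k'. P k' \<Longrightarrow> k \<le> k'"
    using ex_has_least_nat[of P "mdeg n a" id] by auto
  then obtain c where c: "c \<in> M" "c \<le> a" "mdeg n c = k" by (auto simp: P_def)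
  have "c \<in> min_generators n M"
    unfolding min_generators_def
  proof (intro CollectI conjI ballI impI, fact)
    fix b assume b: "b \<in> M" "b \<le> c"
    then have "P (mdeg n b)" using c by (auto simp: P_def intro: order_trans)
    then have "mdeg n c \<le> mdeg n b" using least c by auto
    moreover have bm: "b \<in> monomials n" "c \<in> monomials n" using M b c
      by (auto simp: is_monomial_ideal_def)
    moreover have "\<And>i. b i \<le> c i" using b by (auto simp: le_fun_def)
    ultimately have "\<forall>i\<in>{..<n}. b i = c i"
      unfolding mdeg_def by (metis finite_lessThan sum_strict_mono_ex1 not_less order.order_iff_strict)
    then show "b = c" using bm by (auto simp: monomials_def fun_eq_iff) (metis lessThan_iff not_less)
  qed
  then show ?thesis using c by auto
qed


lemma mem_iff:
  assumes M: "is_sqfree_monomial_ideal n M" and b: "b \<in> monomials n"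
  shows "b \<in> M \<longleftrightarrow> sqmon (supp b) \<in> M"
proof
  have MI: "is_monomial_ideal n M" using M by (simp add: is_sqfree_monomial_ideal_def)
  have sm: "sqmon (supp b) \<in> monomials n" using supp_sub[OF b] by (rule sqmon_mon)
  {
    assume "b \<in> M"
    then obtain g where g: "g \<in> min_generators n M" "g \<le> b" using exists_gen[OF MI] by blast
    have sq: "sqfree_mon g" using M g by (auto simp: is_sqfree_monomial_ideal_def)
    have "g \<le> sqmon (supp b)"
    proof (clarsimp simp: le_fun_def)
      fix i
      have "g i \<le> b i" "g i \<le> 1" using g sq by (auto simp: le_fun_def sqfree_mon_def)
      then show "g i \<le> sqmon (supp b) i" by (auto simp: sqmon_def supp_def)
    qed
    moreover have "g \<in> M" using g by (simp add: min_generators_def)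
    ultimately show "sqmon (supp b) \<in> M" using MI sm by (auto simp: is_monomial_ideal_def)
  }
  {
    assume "sqmon (supp b) \<in> M"
    then show "b \<in> M" using MI b sqmon_le[of b] by (auto simp: is_monomial_ideal_def)
  }
qed

lemma var_iff:
  assumes M: "is_sqfree_monomial_ideal n M" and i: "i < n"
  shows "M \<subseteq> var_ideal n i \<longleftrightarrow> sqmon ({..<n} - {i}) \<notin> M"
proof
  assume "M \<subseteq> var_ideal n i"
  then show "sqmon ({..<n} - {i}) \<notin> M" by (auto simp: var_ideal_def sqmon_def)
next
  assume nm: "sqmon ({..<n} - {i}) \<notin> M"
  have MI: "is_monomial_ideal n M" using M by (simp add: is_sqfree_monomial_ideal_def)
  show "M \<subseteq> var_ideal n i"
  proof
    fix b assume bM: "b \<in> M"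
    then have b: "b \<in> monomials n" using MI by (auto simp: is_monomial_ideal_def)
    show "b \<in> var_ideal n i"
    proof (rule ccontr)
      assume "b \<notin> var_ideal n i"
      then have "b i = 0" using b by (auto simp: var_ideal_def)
      then have "supp b \<subseteq> {..<n} - {i}" using supp_sub[OF b] by (auto simp: supp_def)
      then have le: "sqmon (supp b) \<le> sqmon ({..<n} - {i})" by (rule sqmon_mono)
      have "sqmon (supp b) \<in> M" using mem_iff[OF M b] bM by simp
      then have "sqmon ({..<n} - {i}) \<in> M" using MI le sqmon_mon[of "{..<n} - {i}" n]
        by (auto simp: is_monomial_ideal_def)
      then show False using nm by simp
    qed
  qed
qed

lemma exists_iff:
  assumes M: "is_sqfree_monomial_ideal n M" and n: "1 \<le> n"
  shows "(\<exists>i<n. M \<subseteq> var_ideal n i) \<longleftrightarrow> (\<exists>F\<in>Delta n M. n - 1 \<le> card F)"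
proof
  assume "\<exists>i<n. M \<subseteq> var_ideal n i"
  then obtain i where i: "i < n" "M \<subseteq> var_ideal n i" by auto
  then have "{..<n} - {i} \<in> Delta n M" using var_iff[OF M i(1)] by (auto simp: Delta_def)
  moreover have "card ({..<n} - {i}) = n - 1" using i by simp
  ultimately show "\<exists>F\<in>Delta n M. n - 1 \<le> card F" by force
next
  assume "\<exists>F\<in>Delta n M. n - 1 \<le> card F"
  then obtain F where F: "F \<subseteq> {..<n}" "sqmon F \<notin> M" "n - 1 \<le> card F"
    by (auto simp: Delta_def)
  have "\<exists>i<n. {..<n} - {i} \<subseteq> F"
  proof (cases "F = {..<n}")
    case True then show ?thesis using n by (intro exI[of _ 0]) auto
  next
    case False
    then obtain i where i: "i < n" "i \<notin> F" using F by auto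
    then have sub: "F \<subseteq> {..<n} - {i}" using F by auto
    moreover have "card ({..<n} - {i}) \<le> card F" using i F by simp
    moreover have "card F \<le> card ({..<n} - {i})" using sub by (intro card_mono) auto
    ultimately have "F = {..<n} - {i}" by (intro card_subset_eq) auto
    then show ?thesis using i by auto
  qed
  then obtain i where i: "i < n" "{..<n} - {i} \<subseteq> F" by auto
  have MI: "is_monomial_ideal n M" using M by (simp add: is_sqfree_monomial_ideal_def)
  have "sqmon ({..<n} - {i}) \<notin> M"
  proof
    assume "sqmon ({..<n} - {i}) \<in> M"
    then have "sqmon F \<in> M" using MI sqmon_mono[OF i(2)] sqmon_mon[OF F(1)]
      by (auto simp: is_monomial_ideal_def)
    then show False using F by simp
  qed
  then show "\<exists>i<n. M \<subseteq> var_ideal n i" using var_iff[OF M i(1)] i by auto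
qed

lemma finite_Delta: "finite (Delta n M)"
  by (rule finite_subset[of _ "Pow {..<n}"]) (auto simp: Delta_def)

lemma exists_cnt:
  "(\<exists>F\<in>Delta n M. n - 1 \<le> card F) \<longleftrightarrow> cnt n M (n - 1) \<noteq> 0 \<or> cnt n M n \<noteq> 0"
proof -
  have fin: "\<And>j. finite {F \<in> Delta n M. card F = j}" using finite_Delta by auto
  have le: "\<And>F. F \<in> Delta n M \<Longrightarrow> card F \<le> n"
    by (auto simp: Delta_def) (metis card_lessThan card_mono finite_lessThan)
  show ?thesis
  proof
    assume "\<exists>F\<in>Delta n M. n - 1 \<le> card F"
    then obtain F where F: "F \<in> Delta n M" "n - 1 \<le> card F" by auto
    then have "card F = n - 1 \<or> card F = n" using le[OF F(1)] by linarith
    then show "cnt n M (n - 1) \<noteq> 0 \<or> cnt n M n \<noteq> 0"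
      unfolding cnt_def using fin F(1) by (auto simp: card_eq_0_iff)
  next
    assume "cnt n M (n - 1) \<noteq> 0 \<or> cnt n M n \<noteq> 0"
    then show "\<exists>F\<in>Delta n M. n - 1 \<le> card F"
      unfolding cnt_def by (auto simp: card_eq_0_iff) (metis le_refl, metis diff_le_self)
  qed
qed


lemma card_Pn:
  assumes F: "F \<subseteq> {..<n}"
  shows "card (Pn n F D) = gn n (card F) D"
proof -
  define j where "j = card F"
  have finF: "finite F" using F finite_subset by blast
  have jn: "j \<le> n" unfolding j_def using card_mono[OF _ F] by simp
  obtain h where h: "bij_betw h {..<j} F"
    using ex_bij_betw_nat_finite[OF finF] unfolding j_def atLeast0LessThan by blast
  define h' where "h' = inv_into {..<j} h"
  have h': "bij_betw h' F {..<j}" unfolding h'_def using h by (rule bij_betw_inv_into)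
  have hl: "\<And>y. y < j \<Longrightarrow> h' (h y) = y" unfolding h'_def
    using h bij_betw_inv_into_left by fastforce
  have hr: "\<And>x. x \<in> F \<Longrightarrow> h (h' x) = x" unfolding h'_def
    using h bij_betw_inv_into_right by fastforce
  have hF: "\<And>y. y < j \<Longrightarrow> h y \<in> F" using h by (auto simp: bij_betw_def)
  have h'F: "\<And>x. x \<in> F \<Longrightarrow> h' x < j" using h' by (auto simp: bij_betw_def)
  define \<phi> where "\<phi> = (\<lambda>b::nat\<Rightarrow>nat. \<lambda>y. if y < j then b (h y) else 0)"
  define \<psi> where "\<psi> = (\<lambda>c::nat\<Rightarrow>nat. \<lambda>x. if x \<in> F then c (h' x) else 0)"
  have "bij_betw \<phi> (Pn n F D) (Pn n {..<j} D)"
  proof (rule bij_betw_byWitness[where f' = \<psi>])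
    show "\<forall>b\<in>Pn n F D. \<psi> (\<phi> b) = b"
    proof
      fix b assume b: "b \<in> Pn n F D"
      show "\<psi> (\<phi> b) = b"
      proof
        fix x show "\<psi> (\<phi> b) x = b x"
          using b hr h'F by (auto simp: \<psi>_def \<phi>_def Pn_def supp_def)
      qed
    qed
    show "\<forall>c\<in>Pn n {..<j} D. \<phi> (\<psi> c) = c"
    proof
      fix c assume c: "c \<in> Pn n {..<j} D"
      show "\<phi> (\<psi> c) = c"
      proof
        fix y show "\<phi> (\<psi> c) y = c y"
          using c hl hF by (auto simp: \<psi>_def \<phi>_def Pn_def supp_def)
      qed
    qed
    show "\<phi> ` Pn n F D \<subseteq> Pn n {..<j} D"
    proof clarify
      fix b assume b: "b \<in> Pn n F D"
      then have bm: "b \<in> monomials n" and sb: "supp b = F" and db: "mdeg n b = D"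
        by (auto simp: Pn_def Dn_def)
      have m: "\<phi> b \<in> monomials n" using jn by (auto simp: monomials_def \<phi>_def)
      have s: "supp (\<phi> b) = {..<j}" using sb hF by (auto simp: supp_def \<phi>_def)
      have "mdeg n (\<phi> b) = sum (\<phi> b) {..<j}" using m s jn by (intro mdeg_supp) auto
      also have "\<dots> = (\<Sum>y<j. b (h y))" by (simp add: \<phi>_def)
      also have "\<dots> = sum b F" using h by (rule sum.reindex_bij_betw)
      also have "\<dots> = D" using mdeg_supp[OF bm _ F] sb db by simp
      finally show "\<phi> b \<in> Pn n {..<j} D" using m s by (simp add: Pn_def Dn_def)
    qed
    show "\<psi> ` Pn n {..<j} D \<subseteq> Pn n F D"
    proof clarify
      fix c assume c: "c \<in> Pn n {..<j} D"
      then have cm: "c \<in> monomials n" and sc: "supp c = {..<j}" and dc: "mdeg n c = D"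
        by (auto simp: Pn_def Dn_def)
      have m: "\<psi> c \<in> monomials n" using F by (auto simp: monomials_def \<psi>_def)
      have s: "supp (\<psi> c) = F" using sc h'F by (auto simp: supp_def \<psi>_def)
      have "mdeg n (\<psi> c) = sum (\<psi> c) F" using m s F by (intro mdeg_supp) auto
      also have "\<dots> = (\<Sum>x\<in>F. c (h' x))" by (simp add: \<psi>_def)
      also have "\<dots> = sum c {..<j}" using h' by (rule sum.reindex_bij_betw)
      also have "\<dots> = D" using mdeg_supp[OF cm _, of "{..<j}"] sc dc jn by simp
      finally show "\<psi> c \<in> Pn n F D" using m s by (simp add: Pn_def Dn_def)
    qed
  qed
  then show ?thesis unfolding gn_def j_def by (rule bij_betw_same_card)
qed

lemma gn_zero:
  assumes jn: "j \<le> n" and Dj: "D < j"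
  shows "gn n j D = 0"
proof -
  have "Pn n {..<j} D = {}"
  proof (rule ccontr)
    assume "Pn n {..<j} D \<noteq> {}"
    then obtain b where b: "b \<in> monomials n" "supp b = {..<j}" "mdeg n b = D"
      unfolding Pn_def Dn_def by blast
    have sub: "supp b \<subseteq> {..<j}" "{..<j} \<subseteq> {..<n}" using b(2) jn by auto
    have e1: "D = sum b {..<j}" using mdeg_supp[OF b(1) sub] b(3) by simp
    have pos: "1 \<le> b y" if y: "y \<in> {..<j}" for y
    proof -
      have "y \<in> supp b" using b(2) y by simp
      then have "b y \<noteq> 0" unfolding supp_def by simp
      then show ?thesis by simp
    qed
    have "(\<Sum>y<j. (1::nat)) \<le> sum b {..<j}" by (rule sum_mono) (rule pos)
    then have "j \<le> D" using e1 by simp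
    then show False using Dj by simp
  qed
  then show ?thesis by (simp add: gn_def)
qed

lemma gn_pos:
  assumes "D \<le> n"
  shows "gn n D D > 0"
proof -
  have m: "sqmon {..<D} \<in> monomials n" using assms by (intro sqmon_mon) auto
  have "mdeg n (sqmon {..<D}) = sum (sqmon {..<D}) {..<D}"
    using m assms by (intro mdeg_supp) (auto simp: supp_sqmon)
  also have "\<dots> = D" by (simp add: sqmon_def)
  finally have "sqmon {..<D} \<in> Pn n {..<D} D" using m by (simp add: Pn_def Dn_def supp_sqmon)
  moreover have "finite (Pn n {..<D} D)"
    by (rule finite_subset[OF _ finite_Dn[of n D]]) (auto simp: Pn_def)
  ultimately show ?thesis unfolding gn_def by (auto simp: card_gt_0_iff)
qed

lemma card_comp:
  assumes M: "is_sqfree_monomial_ideal n M"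
  shows "card (Dn n D - M) = (\<Sum>j\<le>n. cnt n M j * gn n j D)"
proof -
  have eq: "Dn n D - M = (\<Union>F\<in>Delta n M. Pn n F D)"
  proof safe
    fix b assume b: "b \<in> Dn n D" "b \<notin> M"
    then have bm: "b \<in> monomials n" by (simp add: Dn_def)
    then have "supp b \<in> Delta n M" using mem_iff[OF M bm] b supp_sub[OF bm]
      by (auto simp: Delta_def)
    then show "b \<in> (\<Union>F\<in>Delta n M. Pn n F D)" using b by (auto simp: Pn_def)
  next
    fix b F assume "F \<in> Delta n M" "b \<in> Pn n F D"
    then show "b \<in> Dn n D" by (simp add: Pn_def)
  next
    fix b F assume F: "F \<in> Delta n M" and b: "b \<in> Pn n F D" and bM: "b \<in> M"
    then have bm: "b \<in> monomials n" by (simp add: Pn_def Dn_def)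
    show False using mem_iff[OF M bm] bM b F by (auto simp: Pn_def Delta_def)
  qed
  have "card (\<Union>F\<in>Delta n M. Pn n F D) = (\<Sum>F\<in>Delta n M. card (Pn n F D))"
    by (rule card_UN_disjoint)
       (auto simp: finite_Delta Pn_def intro: finite_subset[OF _ finite_Dn[of n D]])
  also have "\<dots> = (\<Sum>F\<in>Delta n M. gn n (card F) D)"
    by (intro sum.cong refl card_Pn) (auto simp: Delta_def)
  also have "\<dots> = (\<Sum>j\<le>n. \<Sum>F\<in>{F \<in> Delta n M. card F = j}. gn n (card F) D)"
  proof (rule sum.group[symmetric])
    show "finite (Delta n M)" by (rule finite_Delta)
    show "finite {..n}" by simp
    show "card ` Delta n M \<subseteq> {..n}"
      by (auto simp: Delta_def) (metis card_lessThan card_mono finite_lessThan)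
  qed
  also have "\<dots> = (\<Sum>j\<le>n. cnt n M j * gn n j D)"
    by (intro sum.cong refl) (simp add: cnt_def)
  finally show ?thesis using eq by simp
qed


lemma split_sum:
  fixes f :: "nat \<Rightarrow> nat"
  assumes "j \<le> n" "\<And>k. j < k \<Longrightarrow> k \<le> n \<Longrightarrow> f k = 0"
  shows "sum f {..n} = sum f {..<j} + f j"
proof -
  have "sum f {..n} = sum f {..j}"
    by (rule sum.mono_neutral_right) (use assms in auto)
  also have "\<dots> = sum f {..<Suc j}" by (simp add: lessThan_Suc_atMost)
  also have "\<dots> = sum f {..<j} + f j" by simp
  finally show ?thesis .
qed

lemma cnt_eq:
  assumes H: "\<And>D. (\<Sum>j\<le>n. a j * gn n j D) = (\<Sum>j\<le>n. b j * gn n j D)"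
  shows "j \<le> n \<Longrightarrow> a j = b j"
proof (induction j rule: less_induct)
  case (less j)
  have za: "\<And>k. j < k \<Longrightarrow> k \<le> n \<Longrightarrow> a k * gn n k j = 0" using gn_zero by simp
  have zb: "\<And>k. j < k \<Longrightarrow> k \<le> n \<Longrightarrow> b k * gn n k j = 0" using gn_zero by simp
  have "(\<Sum>k<j. a k * gn n k j) = (\<Sum>k<j. b k * gn n k j)"
    using less by (intro sum.cong refl) auto
  moreover have "(\<Sum>k\<le>n. a k * gn n k j) = (\<Sum>k<j. a k * gn n k j) + a j * gn n j j"
    using split_sum[of j n "\<lambda>k. a k * gn n k j"] less(2) za by simp
  moreover have "(\<Sum>k\<le>n. b k * gn n k j) = (\<Sum>k<j. b k * gn n k j) + b j * gn n j j"
    using split_sum[of j n "\<lambda>k. b k * gn n k j"] less(2) zb by simp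
  ultimately have eq: "a j * gn n j j = b j * gn n j j" using H[of j] by linarith
  have pos: "gn n j j > 0" using gn_pos less(2) by simp
  show ?case using eq pos by simp
qed

lemma comp_hilb:
  assumes M: "is_sqfree_monomial_ideal n M"
  shows "card (Dn n D - M) = card (Dn n D) - hilb n M D"
proof -
  have "M \<subseteq> monomials n" using M by (simp add: is_sqfree_monomial_ideal_def is_monomial_ideal_def)
  then have "{a\<in>M. mdeg n a = D} = Dn n D \<inter> M" by (auto simp: Dn_def)
  then have "hilb n M D = card (Dn n D \<inter> M)" by (simp add: hilb_def)
  moreover have "card (Dn n D - M) = card (Dn n D) - card (Dn n D \<inter> M)"
    by (rule card_Diff_subset_Int) (simp add: finite_Dn)
  ultimately show ?thesis by simp
qed

theorem lemma3p5:
  fixes n :: nat and I L :: "(nat \<Rightarrow> nat) set"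
  assumes "1 \<le> n"
    and "is_sqfree_monomial_ideal n I"
    and "is_sqfree_lexification n I L"
  shows "L \<subseteq> var_ideal n 0 \<longleftrightarrow> (\<exists>i<n. I \<subseteq> var_ideal n i)"
proof -
  have hI: "is_sqfree_monomial_ideal n I" by fact
  have lex: "is_sqfree_lex n L" and hh: "\<And>d. hilb n L d = hilb n I d"
    using assms(3) by (auto simp: is_sqfree_lexification_def)
  have hL: "is_sqfree_monomial_ideal n L" using lex by (simp add: is_sqfree_lex_def)
  have "\<And>D. (\<Sum>j\<le>n. cnt n I j * gn n j D) = (\<Sum>j\<le>n. cnt n L j * gn n j D)"
    using card_comp[OF hI] card_comp[OF hL] comp_hilb[OF hI] comp_hilb[OF hL] hh by metis
  then have ce: "\<And>j. j \<le> n \<Longrightarrow> cnt n I j = cnt n L j" by (rule cnt_eq)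
  have e1: "(\<exists>i<n. I \<subseteq> var_ideal n i) \<longleftrightarrow> (\<exists>i<n. L \<subseteq> var_ideal n i)"
    unfolding exists_iff[OF hI assms(1)] exists_iff[OF hL assms(1)] exists_cnt
    using ce[of n] ce[of "n - 1"] by simp
  have e2: "L \<subseteq> var_ideal n 0 \<longleftrightarrow> (\<exists>i<n. L \<subseteq> var_ideal n i)"
  proof
    assume "L \<subseteq> var_ideal n 0" then show "\<exists>i<n. L \<subseteq> var_ideal n i" by (intro exI[of _ 0]) (use assms(1) in auto)
  next
    assume "\<exists>i<n. L \<subseteq> var_ideal n i"
    then obtain i where i: "i < n" "L \<subseteq> var_ideal n i" by auto
    define A where "A = {..<n} - {0}"
    define B where "B = {..<n} - {i}"
    have nB: "sqmon B \<notin> L" using var_iff[OF hL i(1)] i(2) by (simp add: B_def)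
    have "sqmon A \<notin> L"
    proof (cases "i = 0")
      case True then show ?thesis using nB by (simp add: A_def B_def)
    next
      case False
      show ?thesis
      proof
        assume inA: "sqmon A \<in> L"
        have "(A - B) \<union> (B - A) = {0, i}" using False i(1) assms(1) by (auto simp: A_def B_def)
        then have "sq_lex_gt B A" using False by (auto simp: sq_lex_gt_def A_def B_def)
        moreover have "card A = card B" using i(1) assms(1) by (simp add: A_def B_def)
        moreover have "A \<subseteq> {..<n}" "B \<subseteq> {..<n}" by (auto simp: A_def B_def)
        ultimately have "sqmon B \<in> L" using lex inA unfolding is_sqfree_lex_def
          by blast
        then show False using nB by simp
      qed
    qed
    then show "L \<subseteq> var_ideal n 0" using var_iff[OF hL, of 0] assms(1) by (simp add: A_def)
  qed
  show ?thesis using e1 e2 by simp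
qed

end
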